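(* Let $G$ be a graph, $P$ a non-trivial prime graph in a split decomposition of $G$, $k$ a positive integer, and $(T,\delta)$ a branch decomposition of $G$ of sm-width less than $k$. Let $a\in V(P)$ and let $(X,Y)$ be a cut of $G$ induced by an edge of $T$. If $|X\cap\operatorname{act}(a:P)|\ge k$ and $|Y\cap \operatorname{act}(N_P(a):P)|\ge k$, then $(X,Y)$ is a split of $G$.
   Context: Graphs are finite, simple, undirected; $\overline{A}=V(G)\setminus A$; $N(S)=N_G(S)=(\bigcup_{v\in S}N(v))\setminus S$; $G[A,B]$ is the bipartite graph on $A\cup B$ with the edges of $G$ between $A$ and $B$. A split of a connected graph $G$ is a partition $(V_1,V_2)$ of $V(G)$ with $|V_1|,|V_2|\ge2$ such that every vertex of $V_1$ with a neighbour in $V_2$ has the same neighbourhood in $V_2$. $\operatorname{mm}(A)$ is the maximum size of a matching in $G[A,\overline A]$, and $\operatorname{sm}(A)=1$ if $(A,\overline A)$ is a split of $G$, otherwise $\operatorname{sm}(A)=\operatorname{mm}(A)$. A branch decomposition $(T,\delta)$ of $G$ is a tree $T$ of maximum degree $3$ with a bijection $\delta$ from the leaves of $T$ to $V(G)$; each edge $e$ of $T$ induces the cut $(A,\overline A)$ where $A$ is the set of $\delta$-images of the leaves in one component of $T-e$. The sm-width of $(T,\delta)$ is the maximum of $\operatorname{sm}(A)$ over cuts induced by edges of $T$; the sm-width $\operatorname{smw}(G)$ of $G$ is the minimum over all branch decompositions. Split decomposition: decomposing along a split $(V_1,V_2)$ gives $G_1=G[V_1]$ plus a new marker $v$ adjacent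 to $N_G(V_2)$ and $G_2=G[V_2]$ plus the same marker adjacent to $N_G(V_1)$; a graph with no split is prime, non-trivial if it has more than 3 vertices; a split decomposition recursively decomposes until all parts are prime, with the split decomposition tree having prime graphs as nodes adjacent iff they share a marker. For $v\in V(G_i)$ ($G_i$ a prime graph of the decomposition), $\operatorname{tot}(v:G_i)=\{v\}$ if $v\in V(G)$, and otherwise (marker shared with $G_j$) the set of vertices of $V(G)$ in the prime graphs of the component of the tree minus $G_i$ containing $G_j$. $\operatorname{act}(v:G_i)=N_G(V(G)\setminus \operatorname{tot}(v:G_i))$, and for $V'\subseteq V(G_i)$, $\operatorname{act}(V':G_i)=\bigcup_{v\in V'}\operatorname{act}(v:G_i)$. *)

theory Defs
  imports Main
begin

text \<open>A graph is a pair (vertex set, edge relation); edges are stored as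
  ordered pairs in both directions (symmetric, irreflexive, within V).\<close>
type_synonym 'v graph = "'v set \<times> ('v \<times> 'v) set"

definition graph :: "'v graph \<Rightarrow> bool" where
  "graph G \<longleftrightarrow> finite (fst G) \<and> snd G \<subseteq> fst G \<times> fst G \<and> sym (snd G)
     \<and> (\<forall>x. (x, x) \<notin> snd G)"

definition nbr :: "'v graph \<Rightarrow> 'v \<Rightarrow> 'v set" where
  "nbr G v = {u. (v, u) \<in> snd G}"

definition nbrs :: "'v graph \<Rightarrow> 'v set \<Rightarrow> 'v set" where
  "nbrs G S = (\<Union>v\<in>S. nbr G v) - S"

definition connected :: "'v graph \<Rightarrow> bool" where
  "connected G \<longleftrightarrow> (\<forall>x\<in>fst G. \<forall>y\<in>fst G. (x, y) \<in> (snd G)\<^sup>*)"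

definition is_split :: "'v graph \<Rightarrow> 'v set \<Rightarrow> 'v set \<Rightarrow> bool" where
  "is_split G V1 V2 \<longleftrightarrow> connected G \<and> V1 \<union> V2 = fst G \<and> V1 \<inter> V2 = {}
     \<and> card V1 \<ge> 2 \<and> card V2 \<ge> 2
     \<and> (\<forall>x\<in>V1. \<forall>y\<in>V1. nbr G x \<inter> V2 \<noteq> {} \<and> nbr G y \<inter> V2 \<noteq> {}
            \<longrightarrow> nbr G x \<inter> V2 = nbr G y \<inter> V2)"

definition prime_graph :: "'v graph \<Rightarrow> bool" where
  "prime_graph H \<longleftrightarrow> \<not> (\<exists>V1 V2. is_split H V1 V2)"

definition cross_matching :: "'v graph \<Rightarrow> 'v set \<Rightarrow> ('v \<times> 'v) set \<Rightarrow> bool" where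
  "cross_matching G A M \<longleftrightarrow>
     (\<forall>(x, y)\<in>M. (x, y) \<in> snd G \<and> x \<in> A \<and> y \<in> fst G - A)
     \<and> (\<forall>(x, y)\<in>M. \<forall>(x', y')\<in>M. x = x' \<longleftrightarrow> y = y')"

definition mm :: "'v graph \<Rightarrow> 'v set \<Rightarrow> nat" where
  "mm G A = Max {card M | M. cross_matching G A M}"

definition sm :: "'v graph \<Rightarrow> 'v set \<Rightarrow> nat" where
  "sm G A = (if is_split G A (fst G - A) then 1 else mm G A)"

definition is_cycle :: "'v graph \<Rightarrow> 'v list \<Rightarrow> bool" where
  "is_cycle T xs \<longleftrightarrow> length xs \<ge> 3 \<and> distinct xs \<and> set xs \<subseteq> fst T
     \<and> (\<forall>i < length xs. (xs ! i, xs ! ((i + 1) mod length xs)) \<in> snd T)"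

definition tree :: "'v graph \<Rightarrow> bool" where
  "tree T \<longleftrightarrow> graph T \<and> fst T \<noteq> {} \<and> connected T \<and> \<not> (\<exists>xs. is_cycle T xs)"

definition degree :: "'v graph \<Rightarrow> 'v \<Rightarrow> nat" where
  "degree T v = card (nbr T v)"

definition leaves :: "'v graph \<Rightarrow> 'v set" where
  "leaves T = {v \<in> fst T. degree T v \<le> 1}"

definition branch_decomposition :: "'a graph \<Rightarrow> 't graph \<Rightarrow> ('t \<Rightarrow> 'a) \<Rightarrow> bool" where
  "branch_decomposition G T \<delta> \<longleftrightarrow> tree T \<and> (\<forall>v\<in>fst T. degree T v \<le> 3)
     \<and> bij_betw \<delta> (leaves T) (fst G)"

definition edge_cut :: "'t graph \<Rightarrow> ('t \<Rightarrow> 'a) \<Rightarrow> 't \<Rightarrow> 't \<Rightarrow> 'a set" where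
  "edge_cut T \<delta> u v =
     \<delta> ` (leaves T \<inter> {w. (u, w) \<in> (snd T - {(u, v), (v, u)})\<^sup>*})"

definition branch_smw :: "'a graph \<Rightarrow> 't graph \<Rightarrow> ('t \<Rightarrow> 'a) \<Rightarrow> nat" where
  "branch_smw G T \<delta> = Max ({sm G (edge_cut T \<delta> u v) | u v. (u, v) \<in> snd T} \<union> {0})"

text \<open>Vertices of the graphs of a split decomposition of G :: 'a graph are of type
  'a + nat: original vertices are Inl x, marker vertices are Inr m.\<close>
definition lift :: "'a graph \<Rightarrow> ('a + nat) graph" where
  "lift G = (Inl ` fst G, map_prod Inl Inl ` snd G)"

definition split_part :: "('a + nat) graph \<Rightarrow> ('a + nat) set \<Rightarrow> ('a + nat) set \<Rightarrow> nat
    \<Rightarrow> ('a + nat) graph" where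
  "split_part H V1 V2 m =
     (insert (Inr m) V1,
      (snd H \<inter> (V1 \<times> V1)) \<union> {(Inr m, x) | x. x \<in> nbrs H V2}
        \<union> {(x, Inr m) | x. x \<in> nbrs H V2})"

inductive split_dec :: "'a graph \<Rightarrow> ('a + nat) graph set \<Rightarrow> bool" for G where
  init: "split_dec G {lift G}"
| step: "split_dec G D \<Longrightarrow> H \<in> D \<Longrightarrow> is_split H V1 V2 \<Longrightarrow> Inr m \<notin> (\<Union>Q\<in>D. fst Q) \<Longrightarrow>
     split_dec G (insert (split_part H V1 V2 m) (insert (split_part H V2 V1 m) (D - {H})))"

definition split_decomposition :: "'a graph \<Rightarrow> ('a + nat) graph set \<Rightarrow> bool" where
  "split_decomposition G D \<longleftrightarrow> split_dec G D \<and> (\<forall>H\<in>D. prime_graph H)"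

text \<open>Adjacency of the split decomposition tree minus the node P.\<close>
definition tree_adj_minus :: "('a + nat) graph set \<Rightarrow> ('a + nat) graph
    \<Rightarrow> (('a + nat) graph \<times> ('a + nat) graph) set" where
  "tree_adj_minus D P = {(Q, R). Q \<in> D \<and> R \<in> D \<and> Q \<noteq> P \<and> R \<noteq> P \<and> Q \<noteq> R
      \<and> (\<exists>m. Inr m \<in> fst Q \<and> Inr m \<in> fst R)}"

definition tot :: "'a graph \<Rightarrow> ('a + nat) graph set \<Rightarrow> ('a + nat) graph \<Rightarrow> ('a + nat) \<Rightarrow> 'a set" where
  "tot G D P v = (case v of Inl x \<Rightarrow> {x}
     | Inr m \<Rightarrow> {x \<in> fst G. \<exists>Q\<in>D. Q \<noteq> P \<and> Inr m \<in> fst Q \<and>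
                   (\<exists>R\<in>D. Inl x \<in> fst R \<and> (Q, R) \<in> (tree_adj_minus D P)\<^sup>*)})"

definition act :: "'a graph \<Rightarrow> ('a + nat) graph set \<Rightarrow> ('a + nat) graph \<Rightarrow> ('a + nat) \<Rightarrow> 'a set" where
  "act G D P v = nbrs G (fst G - tot G D P v)"

definition act_set :: "'a graph \<Rightarrow> ('a + nat) graph set \<Rightarrow> ('a + nat) graph \<Rightarrow> ('a + nat) set \<Rightarrow> 'a set" where
  "act_set G D P S = (\<Union>v\<in>S. act G D P v)"

end

theory Submission
  imports Defs
begin

definition cmp :: "('a + nat) graph set \<Rightarrow> ('a + nat) graph \<Rightarrow> nat \<Rightarrow> ('a + nat) graph set" where
  "cmp D P m = {R. \<exists>Q0\<in>D. Q0 \<noteq> P \<and> Inr m \<in> fst Q0 \<and> (Q0, R) \<in> (tree_adj_minus D P)\<^sup>*}"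

definition nodeinv :: "'a graph \<Rightarrow> ('a + nat) graph set \<Rightarrow> ('a + nat) graph \<Rightarrow> bool" where
  "nodeinv G D Q \<longleftrightarrow>
    (\<forall>x. Inl x \<in> fst Q \<longrightarrow> x \<in> fst G) \<and> snd Q \<subseteq> fst Q \<times> fst Q \<and> sym (snd Q) \<and>
    (\<forall>m1 m2. Inr m1 \<in> fst Q \<longrightarrow> Inr m2 \<in> fst Q \<longrightarrow> m1 \<noteq> m2 \<longrightarrow> cmp D Q m1 \<inter> cmp D Q m2 = {}) \<and>
    (\<forall>x\<in>fst G. \<exists>w\<in>fst Q. x \<in> tot G D Q w) \<and>
    (\<forall>w1 w2. (w1, w2) \<in> snd Q \<longrightarrow> (\<forall>x\<in>act G D Q w1. \<forall>y\<in>act G D Q w2. (x, y) \<in> snd G)) \<and>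
    (\<forall>w1\<in>fst Q. \<forall>w2\<in>fst Q. w1 \<noteq> w2 \<longrightarrow> (\<forall>x\<in>tot G D Q w1. \<forall>y\<in>tot G D Q w2. (x, y) \<in> snd G \<longrightarrow> (w1, w2) \<in> snd Q))"

lemma nodeinvD:
  assumes "nodeinv G D Q"
  shows "\<And>x. Inl x \<in> fst Q \<Longrightarrow> x \<in> fst G"
    and "snd Q \<subseteq> fst Q \<times> fst Q"
    and "sym (snd Q)"
    and "\<And>m1 m2. Inr m1 \<in> fst Q \<Longrightarrow> Inr m2 \<in> fst Q \<Longrightarrow> m1 \<noteq> m2 \<Longrightarrow> cmp D Q m1 \<inter> cmp D Q m2 = {}"
    and "\<And>x. x \<in> fst G \<Longrightarrow> \<exists>w\<in>fst Q. x \<in> tot G D Q w"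
    and "\<And>w1 w2 x y. (w1, w2) \<in> snd Q \<Longrightarrow> x \<in> act G D Q w1 \<Longrightarrow> y \<in> act G D Q w2 \<Longrightarrow> (x, y) \<in> snd G"
    and "\<And>w1 w2 x y. w1 \<in> fst Q \<Longrightarrow> w2 \<in> fst Q \<Longrightarrow> w1 \<noteq> w2 \<Longrightarrow> x \<in> tot G D Q w1 \<Longrightarrow> y \<in> tot G D Q w2
       \<Longrightarrow> (x, y) \<in> snd G \<Longrightarrow> (w1, w2) \<in> snd Q"
  using assms unfolding nodeinv_def by blast+

definition avoid :: "('b \<times> 'b) set \<Rightarrow> 'b \<Rightarrow> ('b \<times> 'b) set" where
  "avoid A h = A \<inter> {(p, q). p \<noteq> h \<and> q \<noteq> h}"

lemma avoid_ne: "(s, b) \<in> (avoid A h)\<^sup>* \<Longrightarrow> s \<noteq> h \<Longrightarrow> b \<noteq> h"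
  by (induction rule: rtrancl_induct) (auto simp: avoid_def)

lemma last_visit:
  assumes "(h, b) \<in> A\<^sup>*"
  shows "b = h \<or> (\<exists>s. s \<noteq> h \<and> (h, s) \<in> A \<and> (s, b) \<in> (avoid A h)\<^sup>*)"
  using assms
proof (induction rule: rtrancl_induct)
  case base then show ?case by simp
next
  case (step b c)
  show ?case
  proof (cases "c = h")
    case True then show ?thesis by simp
  next
    case False
    from step.IH show ?thesis
    proof
      assume "b = h" with step.hyps(2) False show ?thesis by blast
    next
      assume "\<exists>s. s \<noteq> h \<and> (h, s) \<in> A \<and> (s, b) \<in> (avoid A h)\<^sup>*"
      then obtain s where s: "s \<noteq> h" "(h, s) \<in> A" "(s, b) \<in> (avoid A h)\<^sup>*" by blast
      have "b \<noteq> h" using avoid_ne s by metis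
      hence "(b, c) \<in> avoid A h" using False step.hyps(2) by (simp add: avoid_def)
      with s show ?thesis by (meson rtrancl.rtrancl_into_rtrancl)
    qed
  qed
qed

lemma first_visit:
  assumes "(a, b) \<in> A\<^sup>*" "a \<noteq> h"
  shows "(a, b) \<in> (avoid A h)\<^sup>* \<or> (\<exists>s. (a, s) \<in> (avoid A h)\<^sup>* \<and> (s, h) \<in> A)"
  using assms(1)
proof (induction rule: rtrancl_induct)
  case base then show ?case by simp
next
  case (step b c)
  from step.IH show ?case
  proof
    assume ab: "(a, b) \<in> (avoid A h)\<^sup>*"
    have "b \<noteq> h" using avoid_ne[OF ab assms(2)] .
    show ?thesis
    proof (cases "c = h")
      case True then show ?thesis using ab step.hyps(2) by blast
    next
      case False
      hence "(b, c) \<in> avoid A h" using \<open>b \<noteq> h\<close> step.hyps(2) by (simp add: avoid_def)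
      then show ?thesis using ab by (meson rtrancl.rtrancl_into_rtrancl)
    qed
  qed blast
qed

lemma adj_rtrancl_in:
  assumes "(Q0, R) \<in> (tree_adj_minus D P)\<^sup>*" "Q0 \<in> D" "Q0 \<noteq> P"
  shows "R \<in> D \<and> R \<noteq> P"
  using assms by (induction rule: rtrancl_induct) (auto simp: tree_adj_minus_def)

lemma cmp_in: "R \<in> cmp D P m \<Longrightarrow> R \<in> D \<and> R \<noteq> P"
  unfolding cmp_def using adj_rtrancl_in by blast

lemma tot_Inr: "tot G D P (Inr m) = {x \<in> fst G. \<exists>R \<in> cmp D P m. Inl x \<in> fst R}"
proof (intro set_eqI iffI)
  fix x assume "x \<in> tot G D P (Inr m)"
  then obtain Q R where "x \<in> fst G" "Q \<in> D" "Q \<noteq> P" "Inr m \<in> fst Q" "R \<in> D" "Inl x \<in> fst R"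
    "(Q, R) \<in> (tree_adj_minus D P)\<^sup>*" by (auto simp: tot_def)
  then show "x \<in> {x \<in> fst G. \<exists>R \<in> cmp D P m. Inl x \<in> fst R}" unfolding cmp_def by blast
next
  fix x assume "x \<in> {x \<in> fst G. \<exists>R \<in> cmp D P m. Inl x \<in> fst R}"
  then obtain Q R where "x \<in> fst G" "Q \<in> D" "Q \<noteq> P" "Inr m \<in> fst Q" "Inl x \<in> fst R"
    "(Q, R) \<in> (tree_adj_minus D P)\<^sup>*" unfolding cmp_def by blast
  moreover have "R \<in> D" using adj_rtrancl_in calculation by metis
  ultimately show "x \<in> tot G D P (Inr m)" unfolding tot_def by auto
qed

lemma tot_Inl: "tot G D P (Inl x) = {x}" by (simp add: tot_def)

lemma act_mem:
  assumes "graph G" "y \<in> act G D P w"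
  shows "y \<in> tot G D P w \<and> (\<exists>z\<in>fst G. z \<notin> tot G D P w \<and> (z, y) \<in> snd G)"
proof -
  from assms(2) obtain z where z: "z \<in> fst G" "z \<notin> tot G D P w" "(z, y) \<in> snd G"
    "y \<notin> fst G - tot G D P w" unfolding act_def nbrs_def nbr_def by blast
  have "y \<in> fst G" using z(3) assms(1) unfolding graph_def by blast
  then show ?thesis using z by blast
qed

lemma act_intro:
  "y \<in> tot G D P w \<Longrightarrow> z \<in> fst G \<Longrightarrow> z \<notin> tot G D P w \<Longrightarrow> (z, y) \<in> snd G \<Longrightarrow> y \<in> act G D P w"
  unfolding act_def nbrs_def nbr_def by auto

lemma act_cong: "tot G D P w = tot G D' P' w' \<Longrightarrow> act G D P w = act G D' P' w'"
  unfolding act_def by simp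

locale stp =
  fixes G :: "'a graph" and D :: "('a + nat) graph set" and H :: "('a + nat) graph"
    and V1 V2 :: "('a + nat) set" and m :: nat and H1 H2 :: "('a + nat) graph"
  assumes gG: "graph G"
    and inv: "\<forall>Q\<in>D. nodeinv G D Q"
    and HD: "H \<in> D"
    and un: "V1 \<union> V2 = fst H" and dj: "V1 \<inter> V2 = {}"
    and ne1: "V1 \<noteq> {}" and ne2: "V2 \<noteq> {}"
    and fresh: "Inr m \<notin> (\<Union>Q\<in>D. fst Q)"
    and H1def: "H1 = split_part H V1 V2 m" and H2def: "H2 = split_part H V2 V1 m"
begin

abbreviation "D' \<equiv> insert H1 (insert H2 (D - {H}))"

lemma fstH1: "fst H1 = insert (Inr m) V1" by (simp add: H1def H2def split_part_def)
lemma fstH2: "fst H2 = insert (Inr m) V2" by (simp add: H1def H2def split_part_def)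
lemma sndH1: "snd H1 = (snd H \<inter> (V1 \<times> V1)) \<union> {(Inr m, x) | x. x \<in> nbrs H V2}
        \<union> {(x, Inr m) | x. x \<in> nbrs H V2}" by (simp add: H1def H2def split_part_def)
lemma Dmark: "R \<in> D \<Longrightarrow> Inr m \<notin> fst R" using fresh by (simp add: UN_iff)
lemma mH: "Inr m \<notin> fst H" using Dmark HD by blast
lemma inH: "x \<in> fst H \<longleftrightarrow> x \<in> V1 \<or> x \<in> V2" using un by auto
lemma mV1: "Inr m \<notin> V1" using mH un by (metis UnCI)
lemma mV2: "Inr m \<notin> V2" using mH un by (metis UnCI)
lemma H1nD: "H1 \<notin> D" by (metis Dmark fstH1 insertI1)
lemma H2nD: "H2 \<notin> D" by (metis Dmark fstH2 insertI1)
lemma H12: "H1 \<noteq> H2"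
proof
  assume "H1 = H2"
  hence e: "insert (Inr m) V1 = insert (Inr m) V2" using fstH1 fstH2 by metis
  obtain v where "v \<in> V1" using ne1 by blast
  hence "v \<in> insert (Inr m) V2" using e by (metis insertI2)
  then show False using \<open>v \<in> V1\<close> mV1 dj by auto
qed
lemma HH1: "H \<noteq> H1" "H \<noteq> H2" using HD H1nD H2nD by auto

lemma invH: "nodeinv G D H" using inv HD by blast
lemma H_S0: "Inl x \<in> fst H \<Longrightarrow> x \<in> fst G" using nodeinvD(1)[OF invH] .
lemma H_W: "snd H \<subseteq> fst H \<times> fst H" using nodeinvD(2)[OF invH] .
lemma H_sym: "(a, b) \<in> snd H \<Longrightarrow> (b, a) \<in> snd H" using nodeinvD(3)[OF invH] unfolding sym_def by blast
lemma H_B: "Inr m1 \<in> fst H \<Longrightarrow> Inr m2 \<in> fst H \<Longrightarrow> m1 \<noteq> m2 \<Longrightarrow> cmp D H m1 \<inter> cmp D H m2 = {}"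
  using nodeinvD(4)[OF invH] .
lemma H_Cov: "x \<in> fst G \<Longrightarrow> \<exists>w\<in>fst H. x \<in> tot G D H w"
  using nodeinvD(5)[OF invH] .
lemma H_E: "(w1, w2) \<in> snd H \<Longrightarrow> x \<in> act G D H w1 \<Longrightarrow> y \<in> act G D H w2 \<Longrightarrow> (x, y) \<in> snd G"
  using nodeinvD(6)[OF invH] .
lemma H_F: "w1 \<in> fst H \<Longrightarrow> w2 \<in> fst H \<Longrightarrow> w1 \<noteq> w2 \<Longrightarrow> x \<in> tot G D H w1 \<Longrightarrow> y \<in> tot G D H w2
   \<Longrightarrow> (x, y) \<in> snd G \<Longrightarrow> (w1, w2) \<in> snd H"
  using nodeinvD(7)[OF invH] .
lemma G_sym: "(a, b) \<in> snd G \<Longrightarrow> (b, a) \<in> snd G" using gG unfolding graph_def sym_def by blast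

definition phi where "phi R = (if R = H1 \<or> R = H2 then H else R)"
definition lft where "lft R = (if R = H then {H1, H2} else {R})"

lemma phi_D: "R \<in> D' \<Longrightarrow> phi R \<in> D"
proof -
  assume R: "R \<in> D'"
  show ?thesis
  proof (cases "R = H1 \<or> R = H2")
    case True then show ?thesis using HD unfolding phi_def by simp
  next
    case False then show ?thesis using R unfolding phi_def by simp
  qed
qed
lemma phi_fst: "R \<in> D' \<Longrightarrow> v \<in> fst R \<Longrightarrow> v \<noteq> Inr m \<Longrightarrow> v \<in> fst (phi R)"
proof -
  assume R: "R \<in> D'" "v \<in> fst R" "v \<noteq> Inr m"
  show ?thesis
  proof (cases "R = H1")
    case True then show ?thesis using R fstH1 inH unfolding phi_def by simp
  next
    case F1: False
    show ?thesis
    proof (cases "R = H2")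
      case True then show ?thesis using R fstH2 inH unfolding phi_def by simp
    next
      case False then show ?thesis using R F1 unfolding phi_def by simp
    qed
  qed
qed

lemma phi_adj:
  assumes Q: "Q \<in> D" "Q \<noteq> H" and e: "(R1, R2) \<in> tree_adj_minus D' Q"
  shows "phi R1 = phi R2 \<or> (phi R1, phi R2) \<in> tree_adj_minus D Q"
proof -
  from e obtain m0 where R: "R1 \<in> D'" "R2 \<in> D'" "R1 \<noteq> Q" "R2 \<noteq> Q" "R1 \<noteq> R2"
     "Inr m0 \<in> fst R1" "Inr m0 \<in> fst R2" by (auto simp: tree_adj_minus_def)
  show ?thesis
  proof (cases "m0 = m")
    case True
    then have "R1 = H1 \<or> R1 = H2" "R2 = H1 \<or> R2 = H2" using R Dmark[of R1] Dmark[of R2] by auto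
    then show ?thesis by (auto simp: phi_def)
  next
    case False
    have "phi R1 \<noteq> Q" "phi R2 \<noteq> Q" using R Q by (auto simp: phi_def)
    moreover have "Inr m0 \<in> fst (phi R1)" "Inr m0 \<in> fst (phi R2)"
      using phi_fst R False by auto
    ultimately show ?thesis using phi_D R(1,2) by (auto simp: tree_adj_minus_def)
  qed
qed

lemma phi_rtr:
  assumes Q: "Q \<in> D" "Q \<noteq> H" and p: "(R1, R2) \<in> (tree_adj_minus D' Q)\<^sup>*"
  shows "(phi R1, phi R2) \<in> (tree_adj_minus D Q)\<^sup>*"
  using p
proof (induction rule: rtrancl_induct)
  case base then show ?case by simp
next
  case (step b c)
  from phi_adj[OF Q step.hyps(2)] step.IH show ?case
    by (metis rtrancl.rtrancl_into_rtrancl)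
qed

lemma lft_in: "Q \<in> D \<Longrightarrow> R \<in> D \<Longrightarrow> R \<noteq> Q \<Longrightarrow> R' \<in> lft R \<Longrightarrow> R' \<in> D' \<and> R' \<noteq> Q"
  using H1nD H2nD HH1 by (auto simp: lft_def split: if_splits)

lemma lft_mem: "R \<in> D \<Longrightarrow> v \<in> fst R \<Longrightarrow> \<exists>R'\<in>lft R. v \<in> fst R'"
  using inH by (auto simp: lft_def fstH1 fstH2)

lemma lft_conn:
  assumes "Q \<in> D" "Q \<noteq> H" "R \<in> D" "R \<noteq> Q" "R' \<in> lft R" "R'' \<in> lft R"
  shows "(R', R'') \<in> (tree_adj_minus D' Q)\<^sup>*"
proof (cases "R = H")
  case False then show ?thesis using assms by (simp add: lft_def)
next
  case True
  have "Q \<noteq> H1" "Q \<noteq> H2" using assms H1nD H2nD by auto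
  hence "(H1, H2) \<in> tree_adj_minus D' Q" "(H2, H1) \<in> tree_adj_minus D' Q"
    using H12 fstH1 fstH2 by (auto simp: tree_adj_minus_def)
  then show ?thesis using True assms(5,6) by (auto simp: lft_def)
qed

lemma lft_adj:
  assumes Q: "Q \<in> D" "Q \<noteq> H" and e: "(R1, R2) \<in> tree_adj_minus D Q"
  shows "\<exists>R1'\<in>lft R1. \<exists>R2'\<in>lft R2. (R1', R2') \<in> tree_adj_minus D' Q"
proof -
  from e obtain m0 where R: "R1 \<in> D" "R2 \<in> D" "R1 \<noteq> Q" "R2 \<noteq> Q" "R1 \<noteq> R2"
     "Inr m0 \<in> fst R1" "Inr m0 \<in> fst R2" by (auto simp: tree_adj_minus_def)
  obtain R1' where R1': "R1' \<in> lft R1" "Inr m0 \<in> fst R1'" using lft_mem R by blast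
  obtain R2' where R2': "R2' \<in> lft R2" "Inr m0 \<in> fst R2'" using lft_mem R by blast
  have "R1' \<noteq> R2'" using R1'(1) R2'(1) R(1,2,5) H1nD H2nD by (auto simp: lft_def split: if_splits)
  moreover have "R1' \<in> D' \<and> R1' \<noteq> Q" "R2' \<in> D' \<and> R2' \<noteq> Q" using lft_in Q R R1' R2' by blast+
  ultimately show ?thesis using R1' R2' by (auto simp: tree_adj_minus_def)
qed

lemma lft_rtr:
  assumes Q: "Q \<in> D" "Q \<noteq> H" and p: "(R1, R2) \<in> (tree_adj_minus D Q)\<^sup>*" and R1: "R1 \<in> D" "R1 \<noteq> Q"
  shows "\<forall>R1'\<in>lft R1. \<forall>R2'\<in>lft R2. (R1', R2') \<in> (tree_adj_minus D' Q)\<^sup>*"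
  using p
proof (induction rule: rtrancl_induct)
  case base then show ?case using lft_conn Q R1 by blast
next
  case (step b c)
  have c: "c \<in> D" "c \<noteq> Q" using step.hyps(2) by (auto simp: tree_adj_minus_def)
  show ?case
  proof (intro ballI)
    fix R1' c' assume a: "R1' \<in> lft R1" "c' \<in> lft c"
    obtain b'' c'' where bc: "b'' \<in> lft b" "c'' \<in> lft c" "(b'', c'') \<in> tree_adj_minus D' Q"
      using lft_adj[OF Q step.hyps(2)] by blast
    have "(R1', b'') \<in> (tree_adj_minus D' Q)\<^sup>*" using step.IH a bc by blast
    moreover have "(c'', c') \<in> (tree_adj_minus D' Q)\<^sup>*" using lft_conn[OF Q c bc(2) a(2)] .
    ultimately show "(R1', c') \<in> (tree_adj_minus D' Q)\<^sup>*" using bc(3)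
      by (meson rtrancl.rtrancl_into_rtrancl rtrancl_trans)
  qed
qed

lemma cmp_old1:
  assumes Q: "Q \<in> D" "Q \<noteq> H" and mm: "m' \<noteq> m" and R: "R' \<in> cmp D' Q m'"
  shows "phi R' \<in> cmp D Q m'"
proof -
  from R obtain Q0 where Q0: "Q0 \<in> D'" "Q0 \<noteq> Q" "Inr m' \<in> fst Q0" "(Q0, R') \<in> (tree_adj_minus D' Q)\<^sup>*"
    unfolding cmp_def by blast
  have "phi Q0 \<in> D" "Inr m' \<in> fst (phi Q0)" using phi_D[OF Q0(1)] phi_fst[OF Q0(1) Q0(3)] mm
    by auto
  moreover have "phi Q0 \<noteq> Q" unfolding phi_def using Q Q0(2) by auto
  moreover have "(phi Q0, phi R') \<in> (tree_adj_minus D Q)\<^sup>*" using phi_rtr Q Q0(4) by blast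
  ultimately show ?thesis by (auto simp: cmp_def)
qed

lemma cmp_old2:
  assumes Q: "Q \<in> D" "Q \<noteq> H" and R: "R \<in> cmp D Q m'" and R': "R' \<in> lft R"
  shows "R' \<in> cmp D' Q m'"
proof -
  from R obtain Q0 where Q0: "Q0 \<in> D" "Q0 \<noteq> Q" "Inr m' \<in> fst Q0" "(Q0, R) \<in> (tree_adj_minus D Q)\<^sup>*"
    unfolding cmp_def by blast
  obtain Q0' where Q0': "Q0' \<in> lft Q0" "Inr m' \<in> fst Q0'" using lft_mem Q0 by blast
  have "Q0' \<in> D'" "Q0' \<noteq> Q" using lft_in Q Q0 Q0' by blast+
  moreover have "(Q0', R') \<in> (tree_adj_minus D' Q)\<^sup>*" using lft_rtr[OF Q Q0(4) Q0(1,2)] Q0' R' by blast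
  ultimately show ?thesis using Q0' by (auto simp: cmp_def)
qed

lemma tot_old:
  assumes Q: "Q \<in> D" "Q \<noteq> H" and w: "w \<noteq> Inr m"
  shows "tot G D' Q w = tot G D Q w"
proof (cases w)
  case (Inl x) then show ?thesis by (simp add: tot_Inl)
next
  case (Inr m')
  with w have mm: "m' \<noteq> m" by simp
  show ?thesis unfolding Inr tot_Inr
  proof (intro set_eqI iffI)
    fix x assume "x \<in> {x \<in> fst G. \<exists>R\<in>cmp D' Q m'. Inl x \<in> fst R}"
    then obtain R where "x \<in> fst G" "R \<in> cmp D' Q m'" "Inl x \<in> fst R" by blast
    moreover have "R \<in> D'" using cmp_in calculation(2) by blast
    ultimately show "x \<in> {x \<in> fst G. \<exists>R\<in>cmp D Q m'. Inl x \<in> fst R}"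
      using cmp_old1[OF Q mm] phi_fst by blast
  next
    fix x assume "x \<in> {x \<in> fst G. \<exists>R\<in>cmp D Q m'. Inl x \<in> fst R}"
    then obtain R where "x \<in> fst G" "R \<in> cmp D Q m'" "Inl x \<in> fst R" by blast
    moreover have "R \<in> D" using cmp_in calculation(2) by blast
    moreover obtain R' where "R' \<in> lft R" "Inl x \<in> fst R'" using lft_mem calculation by blast
    ultimately show "x \<in> {x \<in> fst G. \<exists>R\<in>cmp D' Q m'. Inl x \<in> fst R}"
      using cmp_old2[OF Q] by blast
  qed
qed

lemma nodeinv_old:
  assumes Q: "Q \<in> D" "Q \<noteq> H"
  shows "nodeinv G D' Q"
proof -
  have nQ: "nodeinv G D Q" using inv Q by blast
  have mQ: "Inr m \<notin> fst Q" using Dmark Q by blast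
  have W: "snd Q \<subseteq> fst Q \<times> fst Q" using nQ unfolding nodeinv_def by blast
  have tq: "w \<in> fst Q \<Longrightarrow> tot G D' Q w = tot G D Q w" for w using tot_old Q mQ by metis
  have aq: "w \<in> fst Q \<Longrightarrow> act G D' Q w = act G D Q w" for w using tq act_cong by metis
  have B: "cmp D' Q m1 \<inter> cmp D' Q m2 = {}" if "Inr m1 \<in> fst Q" "Inr m2 \<in> fst Q" "m1 \<noteq> m2" for m1 m2
  proof -
    have "m1 \<noteq> m" "m2 \<noteq> m" using that mQ by auto
    hence "R \<in> cmp D' Q m1 \<Longrightarrow> R \<in> cmp D' Q m2 \<Longrightarrow> False" for R
      using cmp_old1[OF Q] nQ that unfolding nodeinv_def by blast
    then show ?thesis by blast
  qed
  have E: "\<forall>x\<in>act G D' Q w1. \<forall>y\<in>act G D' Q w2. (x, y) \<in> snd G" if "(w1, w2) \<in> snd Q" for w1 w2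
  proof -
    have "w1 \<in> fst Q" "w2 \<in> fst Q" using W that by auto
    then show ?thesis using aq nQ that unfolding nodeinv_def by auto
  qed
  show ?thesis unfolding nodeinv_def
  proof (intro conjI)
    show "\<forall>x\<in>fst G. \<exists>w\<in>fst Q. x \<in> tot G D' Q w" using tq nQ unfolding nodeinv_def by auto
    show "\<forall>w1\<in>fst Q. \<forall>w2\<in>fst Q. w1 \<noteq> w2 \<longrightarrow> (\<forall>x\<in>tot G D' Q w1. \<forall>y\<in>tot G D' Q w2. (x, y) \<in> snd G \<longrightarrow> (w1, w2) \<in> snd Q)"
      using tq nQ unfolding nodeinv_def by auto
  qed (use nQ B E in \<open>auto simp: nodeinv_def\<close>)
qed

lemma D'_cases: "R \<in> D' \<Longrightarrow> R \<noteq> H1 \<Longrightarrow> R \<noteq> H2 \<Longrightarrow> R \<in> D \<and> R \<noteq> H" by simp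

lemma adjB: "(R1, R2) \<in> tree_adj_minus D H \<Longrightarrow> (R1, R2) \<in> tree_adj_minus D' H1"
  using H1nD unfolding tree_adj_minus_def by auto

lemma adjB': "(R1, R2) \<in> avoid (tree_adj_minus D' H1) H2 \<Longrightarrow> (R1, R2) \<in> tree_adj_minus D H"
  unfolding avoid_def tree_adj_minus_def by auto

lemma rtrB: "(R1, R2) \<in> (tree_adj_minus D H)\<^sup>* \<Longrightarrow> (R1, R2) \<in> (tree_adj_minus D' H1)\<^sup>*"
proof -
  have "tree_adj_minus D H \<subseteq> tree_adj_minus D' H1" using adjB by (rule subrelI)
  then show "(R1, R2) \<in> (tree_adj_minus D H)\<^sup>* \<Longrightarrow> (R1, R2) \<in> (tree_adj_minus D' H1)\<^sup>*"
    using rtrancl_mono by blast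
qed

lemma rtrB': "(R1, R2) \<in> (avoid (tree_adj_minus D' H1) H2)\<^sup>* \<Longrightarrow> (R1, R2) \<in> (tree_adj_minus D H)\<^sup>*"
proof -
  have "avoid (tree_adj_minus D' H1) H2 \<subseteq> tree_adj_minus D H" using adjB' by (rule subrelI)
  then show "(R1, R2) \<in> (avoid (tree_adj_minus D' H1) H2)\<^sup>* \<Longrightarrow> (R1, R2) \<in> (tree_adj_minus D H)\<^sup>*"
    using rtrancl_mono by blast
qed

lemma adj_H2:
  assumes "(S, H2) \<in> tree_adj_minus D' H1 \<or> (H2, S) \<in> tree_adj_minus D' H1"
  shows "\<exists>m0. S \<in> D \<and> S \<noteq> H \<and> Inr m0 \<in> V2 \<and> Inr m0 \<in> fst S"
proof -
  from assms obtain m0 where S: "S \<in> D'" "S \<noteq> H1" "S \<noteq> H2" "Inr m0 \<in> fst S" "Inr m0 \<in> fst H2"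
    unfolding tree_adj_minus_def by auto
  have SD: "S \<in> D" "S \<noteq> H" using S(1-3) by auto
  have "m0 \<noteq> m" using Dmark[OF SD(1)] S(4) by auto
  hence "Inr m0 \<in> V2" using S(5) fstH2 by auto
  then show ?thesis using SD S(4) by blast
qed

lemma cmp_H1_V1:
  assumes m': "Inr m' \<in> V1"
  shows "cmp D' H1 m' = cmp D H m'"
proof (intro set_eqI iffI)
  fix R assume "R \<in> cmp D H m'"
  then obtain Q0 where Q0: "Q0 \<in> D" "Q0 \<noteq> H" "Inr m' \<in> fst Q0" "(Q0, R) \<in> (tree_adj_minus D H)\<^sup>*"
    unfolding cmp_def by blast
  have "Q0 \<in> D'" "Q0 \<noteq> H1" using Q0 H1nD by auto
  then show "R \<in> cmp D' H1 m'" using Q0(3) rtrB[OF Q0(4)] unfolding cmp_def by blast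
next
  fix R assume "R \<in> cmp D' H1 m'"
  then obtain Q0 where Q0: "Q0 \<in> D'" "Q0 \<noteq> H1" "Inr m' \<in> fst Q0" and p: "(Q0, R) \<in> (tree_adj_minus D' H1)\<^sup>*"
    unfolding cmp_def by blast
  have mm: "m' \<noteq> m" using m' mV1 by auto
  have "Inr m' \<notin> V2" using m' dj by auto
  hence Q02: "Q0 \<noteq> H2" using Q0(3) mm fstH2 by auto
  hence Q0D: "Q0 \<in> D" "Q0 \<noteq> H" using Q0 by auto
  have m'H: "Inr m' \<in> fst H" using m' inH by auto
  from first_visit[OF p Q02] show "R \<in> cmp D H m'"
  proof
    assume "(Q0, R) \<in> (avoid (tree_adj_minus D' H1) H2)\<^sup>*"
    then show ?thesis using rtrB' Q0D Q0(3) unfolding cmp_def by blast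
  next
    assume "\<exists>s. (Q0, s) \<in> (avoid (tree_adj_minus D' H1) H2)\<^sup>* \<and> (s, H2) \<in> tree_adj_minus D' H1"
    then obtain s where s1: "(Q0, s) \<in> (avoid (tree_adj_minus D' H1) H2)\<^sup>*"
      and s2: "(s, H2) \<in> tree_adj_minus D' H1" by blast
    obtain m0 where m0: "s \<in> D" "s \<noteq> H" "Inr m0 \<in> V2" "Inr m0 \<in> fst s" using adj_H2 s2 by blast
    have "s \<in> cmp D H m0" using m0 unfolding cmp_def by blast
    moreover have "s \<in> cmp D H m'" using rtrB'[OF s1] Q0D Q0(3) unfolding cmp_def by blast
    moreover have "m' \<noteq> m0" using m0(3) m' dj by auto
    moreover have "Inr m0 \<in> fst H" using m0(3) inH by auto
    ultimately show ?thesis using H_B[OF m'H] by blast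
  qed
qed

lemma cmp_H1_m:
  "cmp D' H1 m = insert H2 (\<Union>m0 \<in> {m0. Inr m0 \<in> V2}. cmp D H m0)"
proof (intro set_eqI iffI)
  fix R assume "R \<in> cmp D' H1 m"
  then obtain Q0 where Q0: "Q0 \<in> D'" "Q0 \<noteq> H1" "Inr m \<in> fst Q0" and p: "(Q0, R) \<in> (tree_adj_minus D' H1)\<^sup>*"
    unfolding cmp_def by blast
  have "Q0 = H2" using Q0 Dmark[of Q0] by auto
  with p have p: "(H2, R) \<in> (tree_adj_minus D' H1)\<^sup>*" by simp
  from last_visit[OF p] show "R \<in> insert H2 (\<Union>m0 \<in> {m0. Inr m0 \<in> V2}. cmp D H m0)"
  proof
    assume "R = H2" then show ?thesis by simp
  next
    assume "\<exists>s. s \<noteq> H2 \<and> (H2, s) \<in> tree_adj_minus D' H1 \<and> (s, R) \<in> (avoid (tree_adj_minus D' H1) H2)\<^sup>*"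
    then obtain s where s1: "(H2, s) \<in> tree_adj_minus D' H1"
      and s2: "(s, R) \<in> (avoid (tree_adj_minus D' H1) H2)\<^sup>*" by blast
    obtain m0 where m0: "s \<in> D" "s \<noteq> H" "Inr m0 \<in> V2" "Inr m0 \<in> fst s" using adj_H2 s1 by blast
    have "R \<in> cmp D H m0" using rtrB'[OF s2] m0 unfolding cmp_def by blast
    then show ?thesis using m0(3) by blast
  qed
next
  fix R assume R: "R \<in> insert H2 (\<Union>m0 \<in> {m0. Inr m0 \<in> V2}. cmp D H m0)"
  have H2in: "H2 \<in> D'" "H2 \<noteq> H1" "Inr m \<in> fst H2" using H12 fstH2 by auto
  show "R \<in> cmp D' H1 m"
  proof (cases "R = H2")
    case True then show ?thesis using H2in unfolding cmp_def by blast
  next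
    case False
    then obtain m0 where m0: "Inr m0 \<in> V2" "R \<in> cmp D H m0" using R by blast
    then obtain Q0 where Q0: "Q0 \<in> D" "Q0 \<noteq> H" "Inr m0 \<in> fst Q0" "(Q0, R) \<in> (tree_adj_minus D H)\<^sup>*"
      unfolding cmp_def by blast
    have "(H2, Q0) \<in> tree_adj_minus D' H1"
      using Q0 H2in H1nD H2nD fstH2 m0(1) unfolding tree_adj_minus_def by auto
    hence "(H2, R) \<in> (tree_adj_minus D' H1)\<^sup>*" using rtrB[OF Q0(4)] by (meson converse_rtrancl_into_rtrancl)
    then show ?thesis using H2in unfolding cmp_def by blast
  qed
qed

lemma tot_H1_V1: "w \<in> V1 \<Longrightarrow> tot G D' H1 w = tot G D H w"
  by (cases w) (simp_all add: tot_Inl tot_Inr cmp_H1_V1)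

lemma act_H1_V1: "w \<in> V1 \<Longrightarrow> act G D' H1 w = act G D H w"
  using tot_H1_V1 act_cong by metis

lemma tot_H1_m: "tot G D' H1 (Inr m) = (\<Union>w\<in>V2. tot G D H w)"
proof (intro set_eqI iffI)
  fix x assume "x \<in> tot G D' H1 (Inr m)"
  then obtain R where R: "x \<in> fst G" "R \<in> cmp D' H1 m" "Inl x \<in> fst R" unfolding tot_Inr by blast
  show "x \<in> (\<Union>w\<in>V2. tot G D H w)"
  proof (cases "R = H2")
    case True
    hence "Inl x \<in> V2" using R(3) fstH2 by auto
    moreover have "x \<in> tot G D H (Inl x)" by (simp add: tot_Inl)
    ultimately show ?thesis by blast
  next
    case False
    have "R \<in> (\<Union>m0 \<in> {m0. Inr m0 \<in> V2}. cmp D H m0)" using R(2) False unfolding cmp_H1_m by simp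
    then obtain m0 where m0: "Inr m0 \<in> V2" "R \<in> cmp D H m0" by blast
    have "x \<in> tot G D H (Inr m0)" unfolding tot_Inr using R(1,3) m0(2) by blast
    then show ?thesis using m0(1) by blast
  qed
next
  fix x assume "x \<in> (\<Union>w\<in>V2. tot G D H w)"
  then obtain w where w: "w \<in> V2" "x \<in> tot G D H w" by blast
  show "x \<in> tot G D' H1 (Inr m)"
  proof (cases w)
    case (Inl y)
    hence "x = y" using w by (simp add: tot_Inl)
    hence xV: "Inl x \<in> V2" using w Inl by simp
    hence "Inl x \<in> fst H" by (simp add: inH)
    hence "x \<in> fst G" by (rule H_S0)
    moreover have "H2 \<in> cmp D' H1 m" unfolding cmp_H1_m by simp
    moreover have "Inl x \<in> fst H2" using xV fstH2 by simp
    ultimately show ?thesis unfolding tot_Inr by blast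
  next
    case (Inr m0)
    have "x \<in> tot G D H (Inr m0)" using w Inr by simp
    then obtain R where R: "x \<in> fst G" "R \<in> cmp D H m0" "Inl x \<in> fst R" unfolding tot_Inr by blast
    have "R \<in> cmp D' H1 m" unfolding cmp_H1_m using R(2) w(1) Inr by blast
    then show ?thesis unfolding tot_Inr using R by blast
  qed
qed

lemma nbrsV2: "x \<in> nbrs H V2 \<longleftrightarrow> x \<in> V1 \<and> (\<exists>v\<in>V2. (x, v) \<in> snd H)"
proof
  assume "x \<in> nbrs H V2"
  then obtain v where v: "v \<in> V2" "(v, x) \<in> snd H" "x \<notin> V2" unfolding nbrs_def nbr_def by auto
  have "x \<in> fst H" using H_W v(2) by auto
  hence "x \<in> V1" using v(3) by (simp add: inH)
  moreover have "(x, v) \<in> snd H" using H_sym v(2) .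
  ultimately show "x \<in> V1 \<and> (\<exists>v\<in>V2. (x, v) \<in> snd H)" using v(1) by blast
next
  assume "x \<in> V1 \<and> (\<exists>v\<in>V2. (x, v) \<in> snd H)"
  then show "x \<in> nbrs H V2" unfolding nbrs_def nbr_def using dj H_sym by blast
qed

lemma sndH1': "(a, b) \<in> snd H1 \<longleftrightarrow> ((a, b) \<in> snd H \<and> a \<in> V1 \<and> b \<in> V1)
   \<or> (a = Inr m \<and> b \<in> nbrs H V2) \<or> (b = Inr m \<and> a \<in> nbrs H V2)"
  unfolding sndH1 by auto

lemma E_mark:
  assumes sc: "\<forall>x\<in>V1. \<forall>y\<in>V1. nbr H x \<inter> V2 \<noteq> {} \<and> nbr H y \<inter> V2 \<noteq> {} \<longrightarrow> nbr H x \<inter> V2 = nbr H y \<inter> V2"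
    and w1: "w1 \<in> nbrs H V2" and x: "x \<in> act G D H w1" and y: "y \<in> act G D' H1 (Inr m)"
  shows "(x, y) \<in> snd G"
proof -
  obtain v where w1V: "w1 \<in> V1" "v \<in> V2" "(w1, v) \<in> snd H" using w1 nbrsV2 by blast
  define U where "U = (\<Union>w\<in>V2. tot G D H w)"
  from act_mem[OF gG y] obtain z where z: "y \<in> U" "z \<in> fst G" "z \<notin> U" "(z, y) \<in> snd G"
    unfolding tot_H1_m U_def by blast
  obtain w2 where w2: "w2 \<in> V2" "y \<in> tot G D H w2" using z(1) unfolding U_def by blast
  obtain w0 where w0: "w0 \<in> fst H" "z \<in> tot G D H w0" using H_Cov z(2) by blast
  have w0V: "w0 \<in> V1" using w0 z(3) inH unfolding U_def by blast
  have "w2 \<noteq> w0" using w0V w2(1) dj by auto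
  hence e20: "(w2, w0) \<in> snd H" using H_F[of w2 w0 y z] w2 w0 inH G_sym[OF z(4)] by auto
  have "w2 \<in> nbr H w0 \<inter> V2" using H_sym[OF e20] w2(1) unfolding nbr_def by auto
  moreover have "v \<in> nbr H w1 \<inter> V2" using w1V unfolding nbr_def by auto
  ultimately have "w2 \<in> nbr H w1 \<inter> V2" using sc w0V w1V(1) by blast
  hence e12: "(w1, w2) \<in> snd H" unfolding nbr_def by auto
  have "z \<notin> tot G D H w2" using z(3) w2(1) unfolding U_def by blast
  hence "y \<in> act G D H w2" using act_intro[OF w2(2) z(2) _ z(4)] by blast
  then show ?thesis using H_E[OF e12 x] by blast
qed

lemma nodeinv_H1:
  assumes sc: "\<forall>x\<in>V1. \<forall>y\<in>V1. nbr H x \<inter> V2 \<noteq> {} \<and> nbr H y \<inter> V2 \<noteq> {} \<longrightarrow> nbr H x \<inter> V2 = nbr H y \<inter> V2"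
  shows "nodeinv G D' H1"
  unfolding nodeinv_def
proof (intro conjI allI impI ballI)
  show "x \<in> fst G" if "Inl x \<in> fst H1" for x using that fstH1 H_S0 inH by auto
  show W: "snd H1 \<subseteq> fst H1 \<times> fst H1"
    unfolding fstH1 using sndH1' nbrsV2 by auto
  show "sym (snd H1)" unfolding sym_def sndH1' using H_sym by blast
  show "cmp D' H1 m1 \<inter> cmp D' H1 m2 = {}" if "Inr m1 \<in> fst H1" "Inr m2 \<in> fst H1" "m1 \<noteq> m2" for m1 m2
  proof -
    have B1: "cmp D' H1 a \<inter> cmp D' H1 b = {}" if "Inr a \<in> V1" "Inr b \<in> fst H1" "a \<noteq> b" for a b
    proof (cases "b = m")
      case True
      have "H2 \<notin> cmp D H a" using cmp_in H2nD by blast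
      moreover have "cmp D H a \<inter> cmp D H m0 = {}" if "Inr m0 \<in> V2" for m0
        using H_B[of a m0] that \<open>Inr a \<in> V1\<close> inH dj by auto
      ultimately show ?thesis unfolding True cmp_H1_m cmp_H1_V1[OF \<open>Inr a \<in> V1\<close>] by blast
    next
      case False
      hence "Inr b \<in> V1" using that(2) fstH1 by auto
      then show ?thesis using cmp_H1_V1 \<open>Inr a \<in> V1\<close> H_B[of a b] inH that(3) by auto
    qed
    show ?thesis
    proof (cases "m1 = m")
      case True
      hence "Inr m2 \<in> V1" using that fstH1 by auto
      then show ?thesis using B1[of m2 m1] that by blast
    next
      case False
      hence "Inr m1 \<in> V1" using that fstH1 by auto
      then show ?thesis using B1[of m1 m2] that by blast
    qed
  qed
  show "\<exists>w\<in>fst H1. x \<in> tot G D' H1 w" if xG: "x \<in> fst G" for x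
  proof -
    obtain w where w: "w \<in> fst H" "x \<in> tot G D H w" using H_Cov xG by blast
    show ?thesis
    proof (cases "w \<in> V1")
      case True then show ?thesis using w tot_H1_V1 fstH1 by auto
    next
      case False
      hence "w \<in> V2" using w inH by auto
      then show ?thesis using w tot_H1_m fstH1 by auto
    qed
  qed
  show "(x, y) \<in> snd G" if e: "(w1, w2) \<in> snd H1" and x: "x \<in> act G D' H1 w1" and y: "y \<in> act G D' H1 w2"
    for w1 w2 x y
  proof -
    consider "(w1, w2) \<in> snd H" "w1 \<in> V1" "w2 \<in> V1" | "w1 = Inr m" "w2 \<in> nbrs H V2"
      | "w2 = Inr m" "w1 \<in> nbrs H V2" using e sndH1' by blast
    then show ?thesis
    proof cases
      case 1 then show ?thesis using H_E x y act_H1_V1 by metis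
    next
      case 2
      hence "w2 \<in> V1" using nbrsV2 by blast
      hence "(y, x) \<in> snd G" using E_mark[OF sc 2(2)] x y act_H1_V1 2(1) by metis
      then show ?thesis using G_sym by blast
    next
      case 3
      hence "w1 \<in> V1" using nbrsV2 by blast
      then show ?thesis using E_mark[OF sc 3(2)] x y act_H1_V1 3(1) by metis
    qed
  qed
  show "(w1, w2) \<in> snd H1" if w: "w1 \<in> fst H1" "w2 \<in> fst H1" "w1 \<noteq> w2" and x: "x \<in> tot G D' H1 w1"
    and y: "y \<in> tot G D' H1 w2" and e: "(x, y) \<in> snd G" for w1 w2 x y
  proof -
    have c: "w \<in> fst H1 \<Longrightarrow> w = Inr m \<or> w \<in> V1" for w using fstH1 by auto
    show ?thesis
    proof (cases "w1 = Inr m")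
      case True
      hence w2: "w2 \<in> V1" using w c by auto
      obtain w1' where "w1' \<in> V2" "x \<in> tot G D H w1'" using x True tot_H1_m by auto
      moreover have "w1' \<noteq> w2" using calculation w2 dj by auto
      ultimately have "(w1', w2) \<in> snd H" using H_F[of w1' w2 x y] y tot_H1_V1[OF w2] e inH w2 by auto
      hence "w2 \<in> nbrs H V2" using nbrsV2 w2 H_sym \<open>w1' \<in> V2\<close> by blast
      then show ?thesis using True sndH1' by blast
    next
      case False
      hence w1: "w1 \<in> V1" using w c by auto
      show ?thesis
      proof (cases "w2 = Inr m")
        case True
        obtain w2' where "w2' \<in> V2" "y \<in> tot G D H w2'" using y True tot_H1_m by auto
        moreover have "w1 \<noteq> w2'" using calculation w1 dj by auto
        ultimately have "(w1, w2') \<in> snd H" using H_F[of w1 w2' x y] x tot_H1_V1[OF w1] e inH w1 by auto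
        hence "w1 \<in> nbrs H V2" using nbrsV2 w1 \<open>w2' \<in> V2\<close> by blast
        then show ?thesis using True sndH1' by blast
      next
        case False
        hence w2: "w2 \<in> V1" using w c by auto
        have "(w1, w2) \<in> snd H" using H_F[of w1 w2 x y] x y tot_H1_V1[OF w1] tot_H1_V1[OF w2] e inH w(3) w1 w2 by auto
        then show ?thesis using sndH1' w1 w2 by blast
      qed
    qed
  qed
qed

end

lemma sc_swap:
  assumes sy: "sym (snd H)"
    and sc: "\<forall>x\<in>V1. \<forall>y\<in>V1. nbr H x \<inter> V2 \<noteq> {} \<and> nbr H y \<inter> V2 \<noteq> {} \<longrightarrow> nbr H x \<inter> V2 = nbr H y \<inter> V2"
  shows "\<forall>x\<in>V2. \<forall>y\<in>V2. nbr H x \<inter> V1 \<noteq> {} \<and> nbr H y \<inter> V1 \<noteq> {} \<longrightarrow> nbr H x \<inter> V1 = nbr H y \<inter> V1"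
proof -
  have one: "nbr H x \<inter> V1 \<subseteq> nbr H y \<inter> V1" if "x \<in> V2" "y \<in> V2" "b \<in> nbr H y \<inter> V1" for x y b
  proof
    fix c assume c: "c \<in> nbr H x \<inter> V1"
    have "x \<in> nbr H c \<inter> V2" using c that(1) sy unfolding nbr_def sym_def by auto
    moreover have "y \<in> nbr H b \<inter> V2" using that(2,3) sy unfolding nbr_def sym_def by auto
    ultimately have "nbr H c \<inter> V2 = nbr H b \<inter> V2" using sc c that(3) by blast
    hence "y \<in> nbr H c" using \<open>y \<in> nbr H b \<inter> V2\<close> by blast
    then show "c \<in> nbr H y \<inter> V1" using c sy unfolding nbr_def sym_def by auto
  qed
  show ?thesis
  proof (intro ballI impI)
    fix x y assume xy: "x \<in> V2" "y \<in> V2" "nbr H x \<inter> V1 \<noteq> {} \<and> nbr H y \<inter> V1 \<noteq> {}"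
    then obtain a b where "a \<in> nbr H x \<inter> V1" "b \<in> nbr H y \<inter> V1" by blast
    then show "nbr H x \<inter> V1 = nbr H y \<inter> V1" using one xy by (meson subset_antisym)
  qed
qed

lemma inv_step:
  assumes gG: "graph G" and inv: "\<forall>Q\<in>D. nodeinv G D Q" and HD: "H \<in> D"
    and sp: "is_split H V1 V2" and fr: "Inr m \<notin> (\<Union>Q\<in>D. fst Q)"
  shows "\<forall>Q\<in>insert (split_part H V1 V2 m) (insert (split_part H V2 V1 m) (D - {H})).
           nodeinv G (insert (split_part H V1 V2 m) (insert (split_part H V2 V1 m) (D - {H}))) Q"
proof -
  have un: "V1 \<union> V2 = fst H" and dj: "V1 \<inter> V2 = {}" and c1: "card V1 \<ge> 2" and c2: "card V2 \<ge> 2"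
    and sc: "\<forall>x\<in>V1. \<forall>y\<in>V1. nbr H x \<inter> V2 \<noteq> {} \<and> nbr H y \<inter> V2 \<noteq> {} \<longrightarrow> nbr H x \<inter> V2 = nbr H y \<inter> V2"
    using sp unfolding is_split_def by blast+
  have ne1: "V1 \<noteq> {}" using c1 by (metis card.empty not_numeral_le_zero)
  have ne2: "V2 \<noteq> {}" using c2 by (metis card.empty not_numeral_le_zero)
  have un': "V2 \<union> V1 = fst H" using un by (simp add: Un_commute)
  have dj': "V2 \<inter> V1 = {}" using dj by (simp add: Int_commute)
  interpret A: stp G D H V1 V2 m "split_part H V1 V2 m" "split_part H V2 V1 m"
    by unfold_locales (use gG inv HD un dj ne1 ne2 fr in auto)
  interpret B: stp G D H V2 V1 m "split_part H V2 V1 m" "split_part H V1 V2 m"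
    by unfold_locales (use gG inv HD un' dj' ne1 ne2 fr in auto)
  have sy: "sym (snd H)" using inv HD nodeinvD(3) by blast
  have eq: "insert (split_part H V2 V1 m) (insert (split_part H V1 V2 m) (D - {H}))
    = insert (split_part H V1 V2 m) (insert (split_part H V2 V1 m) (D - {H}))" by (rule insert_commute)
  have n1: "nodeinv G (insert (split_part H V1 V2 m) (insert (split_part H V2 V1 m) (D - {H}))) (split_part H V1 V2 m)"
    using A.nodeinv_H1[OF sc] .
  have n2: "nodeinv G (insert (split_part H V1 V2 m) (insert (split_part H V2 V1 m) (D - {H}))) (split_part H V2 V1 m)"
    using B.nodeinv_H1[OF sc_swap[OF sy sc]] unfolding eq .
  show ?thesis
  proof
    fix Q assume "Q \<in> insert (split_part H V1 V2 m) (insert (split_part H V2 V1 m) (D - {H}))"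
    then consider "Q = split_part H V1 V2 m" | "Q = split_part H V2 V1 m" | "Q \<in> D" "Q \<noteq> H" by blast
    then show "nodeinv G (insert (split_part H V1 V2 m) (insert (split_part H V2 V1 m) (D - {H}))) Q"
    proof cases
      case 1 then show ?thesis using n1 by simp
    next
      case 2 then show ?thesis using n2 by simp
    next
      case 3 then show ?thesis using A.nodeinv_old by blast
    qed
  qed
qed

lemma inv_init:
  assumes gG: "graph G"
  shows "nodeinv G {lift G} (lift G)"
proof -
  have cmp0: "cmp {lift G} (lift G) m = {}" for m unfolding cmp_def by auto
  have tot0: "tot G {lift G} (lift G) (Inr m) = {}" for m unfolding tot_Inr cmp0 by simp
  have fl: "fst (lift G) = Inl ` fst G" and sl: "snd (lift G) = map_prod Inl Inl ` snd G"
    by (simp_all add: lift_def)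
  have Wg: "snd G \<subseteq> fst G \<times> fst G" and sg: "sym (snd G)" using gG unfolding graph_def by auto
  have actI: "act G {lift G} (lift G) (Inl x) \<subseteq> {x}" for x
  proof
    fix z assume "z \<in> act G {lift G} (lift G) (Inl x)"
    then have "z \<in> tot G {lift G} (lift G) (Inl x)" using act_mem[OF gG] by blast
    then show "z \<in> {x}" by (simp add: tot_Inl)
  qed
  show ?thesis unfolding nodeinv_def
  proof (intro conjI allI impI ballI)
    show "x \<in> fst G" if "Inl x \<in> fst (lift G)" for x using that fl by auto
    show "snd (lift G) \<subseteq> fst (lift G) \<times> fst (lift G)" using Wg unfolding fl sl by auto
    show "sym (snd (lift G))" using sg unfolding sl sym_def by auto
    show "cmp {lift G} (lift G) m1 \<inter> cmp {lift G} (lift G) m2 = {}" for m1 m2 by (simp add: cmp0)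
    show "\<exists>w\<in>fst (lift G). x \<in> tot G {lift G} (lift G) w" if "x \<in> fst G" for x
      using that unfolding fl by (intro bexI[of _ "Inl x"]) (auto simp: tot_Inl)
    show "(x, y) \<in> snd G" if e: "(w1, w2) \<in> snd (lift G)" and x: "x \<in> act G {lift G} (lift G) w1"
      and y: "y \<in> act G {lift G} (lift G) w2" for w1 w2 x y
    proof -
      obtain a b where ab: "(a, b) \<in> snd G" "w1 = Inl a" "w2 = Inl b" using e unfolding sl by auto
      then show ?thesis using x y actI by auto
    qed
    show "(w1, w2) \<in> snd (lift G)" if w: "w1 \<in> fst (lift G)" "w2 \<in> fst (lift G)" "w1 \<noteq> w2"
      and x: "x \<in> tot G {lift G} (lift G) w1" and y: "y \<in> tot G {lift G} (lift G) w2"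
      and e: "(x, y) \<in> snd G" for w1 w2 x y
    proof -
      obtain a b where "w1 = Inl a" "w2 = Inl b" using w unfolding fl by auto
      then show ?thesis using x y e unfolding sl by (auto simp: tot_Inl)
    qed
  qed
qed

lemma inv_all:
  assumes "split_dec G D" "graph G"
  shows "\<forall>Q\<in>D. nodeinv G D Q"
  using assms
proof (induction rule: split_dec.induct)
  case init then show ?case using inv_init by simp
next
  case (step D H V1 V2 m)
  show ?case by (rule inv_step[OF step.prems step.IH[OF step.prems] step.hyps(2,3,4)])
qed

lemma key:
  assumes "graph G" "split_decomposition G D" "P \<in> D"
  shows "(w1, w2) \<in> snd P \<Longrightarrow> x \<in> act G D P w1 \<Longrightarrow> y \<in> act G D P w2 \<Longrightarrow> (x, y) \<in> snd G"
proof -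
  have n: "nodeinv G D P" using inv_all assms unfolding split_decomposition_def by blast
  show "(w1, w2) \<in> snd P \<Longrightarrow> x \<in> act G D P w1 \<Longrightarrow> y \<in> act G D P w2 \<Longrightarrow> (x, y) \<in> snd G"
    by (rule nodeinvD(6)[OF n])
qed

lemma mm_ge:
  assumes gG: "graph G" and k: "cross_matching G X M" 
  shows "card M \<le> mm G X"
proof -
  have fin: "finite (snd G)" using gG unfolding graph_def
    by (meson finite_SigmaI finite_subset)
  have "{card M | M. cross_matching G X M} \<subseteq> card ` Pow (snd G)"
  proof
    fix n assume "n \<in> {card M | M. cross_matching G X M}"
    then obtain M' where "n = card M'" "cross_matching G X M'" by blast
    moreover have "M' \<subseteq> snd G" using \<open>cross_matching G X M'\<close>
      unfolding cross_matching_def by auto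
    ultimately show "n \<in> card ` Pow (snd G)" by blast
  qed
  hence "finite {card M | M. cross_matching G X M}" using fin finite_subset by blast
  then show ?thesis unfolding mm_def using k by (intro Max_ge) auto
qed

theorem mainTheorem3:
  fixes G :: "'a graph" and D :: "('a + nat) graph set" and P :: "('a + nat) graph"
    and k :: nat and T :: "'t graph" and \<delta> :: "'t \<Rightarrow> 'a" and a :: "'a + nat"
    and u v :: 't and X Y :: "'a set"
  assumes "graph G"
    and "split_decomposition G D" and "P \<in> D" and "card (fst P) > 3"
    and "k > 0"
    and "branch_decomposition G T \<delta>" and "branch_smw G T \<delta> < k"
    and "a \<in> fst P"
    and "(u, v) \<in> snd T" and "X = edge_cut T \<delta> u v" and "Y = fst G - X"
    and "card (X \<inter> act G D P a) \<ge> k"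
    and "card (Y \<inter> act_set G D P (nbr P a)) \<ge> k"
  shows "is_split G X Y"
proof (rule ccontr)
  assume ns: "\<not> is_split G X Y"
  note E = key[OF assms(1,2,3)]
  obtain A where A: "A \<subseteq> X \<inter> act G D P a" "card A = k" "finite A"
    using obtain_subset_with_card_n[OF assms(12)] by blast
  obtain B where B: "B \<subseteq> Y \<inter> act_set G D P (nbr P a)" "card B = k" "finite B"
    using obtain_subset_with_card_n[OF assms(13)] by blast
  obtain f where f: "bij_betw f A B" using finite_same_card_bij[OF A(3) B(3)] A(2) B(2) by auto
  define M where "M = (\<lambda>x. (x, f x)) ` A"
  have cM: "card M = k" unfolding M_def using A(2) by (subst card_image) (auto simp: inj_on_def)
  have "cross_matching G X M"
    unfolding cross_matching_def
  proof (intro conjI)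
    show "\<forall>(x, y)\<in>M. (x, y) \<in> snd G \<and> x \<in> X \<and> y \<in> fst G - X"
    proof (clarsimp simp: M_def)
      fix x assume x: "x \<in> A"
      have fx: "f x \<in> B" using f x by (auto simp: bij_betw_def)
      then obtain b where b: "b \<in> nbr P a" "f x \<in> act G D P b" using B(1) by (auto simp: act_set_def)
      have "(x, f x) \<in> snd G" using E[of a b x "f x"] b x A(1) by (auto simp: nbr_def)
      then show "(x, f x) \<in> snd G \<and> x \<in> X \<and> f x \<in> fst G \<and> f x \<notin> X"
        using x A(1) fx B(1) assms(11) by auto
    qed
    show "\<forall>(x, y)\<in>M. \<forall>(x', y')\<in>M. (x = x') = (y = y')"
      using f unfolding M_def bij_betw_def inj_on_def by auto
  qed
  hence k1: "k \<le> mm G X" using mm_ge[OF assms(1)] cM by fastforce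
  have "\<not> is_split G X (fst G - X)" using ns assms(11) by simp
  hence k2: "sm G X = mm G X" by (simp add: sm_def)
  have gT: "graph T" using assms(6) by (simp add: branch_decomposition_def tree_def)
  have finT: "finite (snd T)" using gT unfolding graph_def
    by (meson finite_SigmaI finite_subset)
  have "{sm G (edge_cut T \<delta> u v) | u v. (u, v) \<in> snd T} \<subseteq> (\<lambda>p. sm G (edge_cut T \<delta> (fst p) (snd p))) ` snd T"
    by force
  hence fin: "finite ({sm G (edge_cut T \<delta> u v) | u v. (u, v) \<in> snd T} \<union> {0})"
    using finT finite_subset by blast
  have "sm G X \<le> branch_smw G T \<delta>" unfolding branch_smw_def
    using assms(9,10) by (intro Max_ge[OF fin]) blast
  then show False using k1 k2 assms(7) by linarith
qed

end
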